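(* Let $G$ be a locally compact group, $H$ a compact subgroup of $G$, and $X$ a proper $G$-space. (a) If $S$ is a global $H$-slice of $X$ which is a small subset of $X$, then the slicing map $f_S:X\to G/H$ is continuous and open. If in addition $S$ is compact, then $f_S$ is also closed. (b) Conversely, if $f:X\to G/H$ is a continuous equivariant map, then $S=f^{-1}(eH)$ is a global $H$-slice of $X$ which is a small subset of $X$, and $f_S=f$.
   Context: All spaces are completely regular Hausdorff. A $G$-space is a space $X$ with a continuous action $G\times X\to X$, $(g,x)\mapsto gx$, with $ex=x$ and $(gh)x=g(hx)$. A map $f:X\to Y$ between $G$-spaces is equivariant if $f(gx)=gf(x)$. $G/H$ denotes the space of left cosets $xH$ with the quotient topology and action $g(xH)=(gx)H$; $e$ is the unit of $G$. For $S\subset X$, $G(S)=\{gs\mid g\in G,s\in S\}$. For a closed subgroup $H\subset G$, a subset $S\subset X$ is an $H$-slice in $X$ if: (i) $H(S)=S$; (ii) $S$ is closed in $G(S)$; (iii) if $g\in G\setminus H$ then $gS\cap S=\emptyset$; (iv) $G(S)$ is open in $X$. It is a global $H$-slice if moreover $G(S)=X$. For an $H$-slice $S$, the slicing map $f_S:G(S)\to G/H$ is defined by $f_S(gs)=gH$ for $g\in G$, $s\in S$ (well defined by (iii)). For $U,V\subset X$ the transporter is $\langle U,V\rangle=\{g\in G\mid gU\cap V\neq\emptyset\}$; $U$ and $V$ are thin relative to each other if $\langle U,V\rangle$ has compact closure in $G$. A subset $U\subset X$ is small if every point of $X$ has a neighborhood thin relative to $U$. For $G$ locally compact, a $G$-space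 $X$ is proper if every point of $X$ has a small neighborhood. *)

theory Defs
  imports "HOL-Analysis.Analysis" "HOL-Algebra.Left_Coset"
begin

definition topological_group :: "('g, 'b) monoid_scheme \<Rightarrow> 'g topology \<Rightarrow> bool" where
  "topological_group G TG \<longleftrightarrow>
     group G \<and> topspace TG = carrier G \<and>
     continuous_map (prod_topology TG TG) TG (\<lambda>(x, y). x \<otimes>\<^bsub>G\<^esub> y) \<and>
     continuous_map TG TG (\<lambda>x. inv\<^bsub>G\<^esub> x)"

definition G_space :: "('g, 'b) monoid_scheme \<Rightarrow> 'g topology \<Rightarrow> 'x topology \<Rightarrow> ('g \<Rightarrow> 'x \<Rightarrow> 'x) \<Rightarrow> bool" where
  "G_space G TG TX act \<longleftrightarrow>
     continuous_map (prod_topology TG TX) TX (\<lambda>(g, x). act g x) \<and>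
     (\<forall>x\<in>topspace TX. act \<one>\<^bsub>G\<^esub> x = x) \<and>
     (\<forall>g\<in>carrier G. \<forall>h\<in>carrier G. \<forall>x\<in>topspace TX. act (g \<otimes>\<^bsub>G\<^esub> h) x = act g (act h x))"

definition coset_topology :: "('g, 'b) monoid_scheme \<Rightarrow> 'g topology \<Rightarrow> 'g set \<Rightarrow> 'g set topology" where
  "coset_topology G TG H =
     topology (\<lambda>U. U \<subseteq> lcosets\<^bsub>G\<^esub> H \<and> openin TG {x \<in> carrier G. x <#\<^bsub>G\<^esub> H \<in> U})"

lemma istopology_coset_topology:
  "istopology (\<lambda>U. U \<subseteq> lcosets\<^bsub>G\<^esub> H \<and> openin TG {x \<in> carrier G. x <#\<^bsub>G\<^esub> H \<in> U})"
proof -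
  have int: "{x \<in> carrier G. x <#\<^bsub>G\<^esub> H \<in> S \<inter> T} =
        {x \<in> carrier G. x <#\<^bsub>G\<^esub> H \<in> S} \<inter> {x \<in> carrier G. x <#\<^bsub>G\<^esub> H \<in> T}" for S T
    by auto
  have un: "{x \<in> carrier G. x <#\<^bsub>G\<^esub> H \<in> \<Union>K} =
        \<Union>((\<lambda>U. {x \<in> carrier G. x <#\<^bsub>G\<^esub> H \<in> U}) ` K)" for K
    by auto
  show ?thesis
    unfolding istopology_def
    by (auto simp only: int un intro!: openin_Int openin_Union)
qed

abbreviation coset_act :: "('g, 'b) monoid_scheme \<Rightarrow> 'g \<Rightarrow> 'g set \<Rightarrow> 'g set" where
  "coset_act G g C \<equiv> g <#\<^bsub>G\<^esub> C"

definition orbit_set :: "('g, 'b) monoid_scheme \<Rightarrow> ('g \<Rightarrow> 'x \<Rightarrow> 'x) \<Rightarrow> 'x set \<Rightarrow> 'x set" where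
  "orbit_set G act S = {act g s | g s. g \<in> carrier G \<and> s \<in> S}"

definition is_slice :: "('g, 'b) monoid_scheme \<Rightarrow> 'x topology \<Rightarrow> ('g \<Rightarrow> 'x \<Rightarrow> 'x) \<Rightarrow> 'g set \<Rightarrow> 'x set \<Rightarrow> bool" where
  "is_slice G TX act H S \<longleftrightarrow>
     S \<subseteq> topspace TX \<and>
     {act h s | h s. h \<in> H \<and> s \<in> S} = S \<and>
     closedin (subtopology TX (orbit_set G act S)) S \<and>
     (\<forall>g \<in> carrier G - H. (act g ` S) \<inter> S = {}) \<and>
     openin TX (orbit_set G act S)"

definition is_global_slice :: "('g, 'b) monoid_scheme \<Rightarrow> 'x topology \<Rightarrow> ('g \<Rightarrow> 'x \<Rightarrow> 'x) \<Rightarrow> 'g set \<Rightarrow> 'x set \<Rightarrow> bool" where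
  "is_global_slice G TX act H S \<longleftrightarrow> is_slice G TX act H S \<and> orbit_set G act S = topspace TX"

definition slicing_map :: "('g, 'b) monoid_scheme \<Rightarrow> ('g \<Rightarrow> 'x \<Rightarrow> 'x) \<Rightarrow> 'g set \<Rightarrow> 'x set \<Rightarrow> 'x \<Rightarrow> 'g set" where
  "slicing_map G act H S x =
     (SOME C. \<exists>g \<in> carrier G. \<exists>s \<in> S. x = act g s \<and> C = g <#\<^bsub>G\<^esub> H)"

definition transporter :: "('g, 'b) monoid_scheme \<Rightarrow> ('g \<Rightarrow> 'x \<Rightarrow> 'x) \<Rightarrow> 'x set \<Rightarrow> 'x set \<Rightarrow> 'g set" where
  "transporter G act U V = {g \<in> carrier G. (act g ` U) \<inter> V \<noteq> {}}"

definition thin :: "('g, 'b) monoid_scheme \<Rightarrow> 'g topology \<Rightarrow> ('g \<Rightarrow> 'x \<Rightarrow> 'x) \<Rightarrow> 'x set \<Rightarrow> 'x set \<Rightarrow> bool" where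
  "thin G TG act U V \<longleftrightarrow> compactin TG (TG closure_of (transporter G act U V))"

definition neighborhood :: "'x topology \<Rightarrow> 'x \<Rightarrow> 'x set \<Rightarrow> bool" where
  "neighborhood TX x N \<longleftrightarrow> N \<subseteq> topspace TX \<and> (\<exists>W. openin TX W \<and> x \<in> W \<and> W \<subseteq> N)"

definition small :: "('g, 'b) monoid_scheme \<Rightarrow> 'g topology \<Rightarrow> 'x topology \<Rightarrow> ('g \<Rightarrow> 'x \<Rightarrow> 'x) \<Rightarrow> 'x set \<Rightarrow> bool" where
  "small G TG TX act U \<longleftrightarrow>
     (\<forall>x \<in> topspace TX. \<exists>N. neighborhood TX x N \<and> thin G TG act N U)"

definition proper_G_space :: "('g, 'b) monoid_scheme \<Rightarrow> 'g topology \<Rightarrow> 'x topology \<Rightarrow> ('g \<Rightarrow> 'x \<Rightarrow> 'x) \<Rightarrow> bool" where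
  "proper_G_space G TG TX act \<longleftrightarrow>
     G_space G TG TX act \<and> locally_compact_space TG \<and>
     (\<forall>x \<in> topspace TX. \<exists>N. neighborhood TX x N \<and> small G TG TX act N)"

end

theory Submission
  imports Defs
begin

lemma (in group) lcos_eq_iff:
  assumes "subgroup H G" "a \<in> carrier G" "b \<in> carrier G"
  shows "a <# H = b <# H \<longleftrightarrow> inv b \<otimes> a \<in> H"
proof
  assume "a <# H = b <# H"
  then have "a \<in> b <# H" using lcos_self assms by metis
  then show "inv b \<otimes> a \<in> H" using subgroup.lcos_module_imp[OF assms(1) is_group assms(3)] by blast
next
  assume h: "inv b \<otimes> a \<in> H"
  have "a = b \<otimes> (inv b \<otimes> a)" using assms by (simp add: m_assoc[symmetric])
  then have "a <# H = b <# ((inv b \<otimes> a) <# H)"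
    using assms subgroup.subset[OF assms(1)] lcos_m_assoc h by (metis inv_closed m_closed)
  also have "(inv b \<otimes> a) <# H = H"
  proof -
    interpret subgroup H G by fact
    show ?thesis
    proof
      show "(inv b \<otimes> a) <# H \<subseteq> H" using h unfolding l_coset_def by auto
      show "H \<subseteq> (inv b \<otimes> a) <# H"
      proof
        fix x assume x: "x \<in> H"
        have "x = (inv b \<otimes> a) \<otimes> (inv (inv b \<otimes> a) \<otimes> x)"
          using x h by (simp add: m_assoc[symmetric])
        moreover have "inv (inv b \<otimes> a) \<otimes> x \<in> H" using x h by simp
        ultimately show "x \<in> (inv b \<otimes> a) <# H" unfolding l_coset_def by blast
      qed
    qed
  qed
  finally show "a <# H = b <# H" .
qed

lemma coset_top_openin:
  "openin (coset_topology G TG H) U \<longleftrightarrow> U \<subseteq> lcosets\<^bsub>G\<^esub> H \<and> openin TG {x \<in> carrier G. x <#\<^bsub>G\<^esub> H \<in> U}"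
  by (simp add: coset_topology_def istopology_coset_topology)

lemma coset_top_topspace:
  assumes "topspace TG = carrier G"
  shows "topspace (coset_topology G TG H) = lcosets\<^bsub>G\<^esub> H"
proof -
  have "openin (coset_topology G TG H) (lcosets\<^bsub>G\<^esub> H)"
    unfolding coset_top_openin
  proof
    have "{x \<in> carrier G. x <#\<^bsub>G\<^esub> H \<in> lcosets\<^bsub>G\<^esub> H} = topspace TG"
      using assms by (auto simp: LCOSETS_def)
    then show "openin TG {x \<in> carrier G. x <#\<^bsub>G\<^esub> H \<in> lcosets\<^bsub>G\<^esub> H}" by simp
  qed simp
  then have "lcosets\<^bsub>G\<^esub> H \<subseteq> topspace (coset_topology G TG H)" by (rule openin_subset)
  then show ?thesis
  proof (intro subset_antisym)
    show "topspace (coset_topology G TG H) \<subseteq> lcosets\<^bsub>G\<^esub> H"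
      unfolding topspace_def using coset_top_openin by blast
  qed
qed

locale tgs =
  fixes G :: "('g, 'b) monoid_scheme" (structure) and TG :: "'g topology"
    and TX :: "'x topology" and act :: "'g \<Rightarrow> 'x \<Rightarrow> 'x" and H :: "'g set"
  assumes tg: "topological_group G TG" and gs: "G_space G TG TX act" and sub: "subgroup H G"

sublocale tgs \<subseteq> group G using tg by (simp add: topological_group_def)

context tgs
begin

lemma topG: "topspace TG = carrier G" using tg by (simp add: topological_group_def)

lemma cont_mult: "continuous_map (prod_topology TG TG) TG (\<lambda>(x, y). x \<otimes> y)"
  using tg by (simp add: topological_group_def)

lemma cont_inv: "continuous_map TG TG (\<lambda>x. inv x)"
  using tg by (simp add: topological_group_def)

lemma cont_act: "continuous_map (prod_topology TG TX) TX (\<lambda>(g, x). act g x)"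
  using gs by (simp add: G_space_def)

lemma act_one: "x \<in> topspace TX \<Longrightarrow> act \<one> x = x"
  using gs by (simp add: G_space_def)

lemma act_mult: "g \<in> carrier G \<Longrightarrow> h \<in> carrier G \<Longrightarrow> x \<in> topspace TX \<Longrightarrow> act (g \<otimes> h) x = act g (act h x)"
  using gs by (simp add: G_space_def)

lemma act_in: "g \<in> carrier G \<Longrightarrow> x \<in> topspace TX \<Longrightarrow> act g x \<in> topspace TX"
proof -
  assume "g \<in> carrier G" "x \<in> topspace TX"
  then have "(g, x) \<in> topspace (prod_topology TG TX)" using topG by simp
  then have "(\<lambda>(g, x). act g x) (g, x) \<in> topspace TX"
    using continuous_map_image_subset_topspace[OF cont_act] by blast
  then show ?thesis by simp
qed

lemma act_inv_act: "g \<in> carrier G \<Longrightarrow> x \<in> topspace TX \<Longrightarrow> act (inv g) (act g x) = x"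
proof -
  assume a: "g \<in> carrier G" "x \<in> topspace TX"
  then have "act (inv g) (act g x) = act (inv g \<otimes> g) x" using act_mult[of "inv g" g x] by simp
  also have "\<dots> = x" using a act_one by simp
  finally show ?thesis .
qed

lemma act_act_inv: "g \<in> carrier G \<Longrightarrow> x \<in> topspace TX \<Longrightarrow> act g (act (inv g) x) = x"
proof -
  assume a: "g \<in> carrier G" "x \<in> topspace TX"
  then have "act g (act (inv g) x) = act (g \<otimes> inv g) x" using act_mult[of g "inv g" x] by simp
  also have "\<dots> = x" using a act_one by simp
  finally show ?thesis .
qed

lemma cont_act_left: "x \<in> topspace TX \<Longrightarrow> continuous_map TG TX (\<lambda>g. act g x)"
proof -
  assume x: "x \<in> topspace TX"
  have "continuous_map TG (prod_topology TG TX) (\<lambda>g. (g, x))"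
    using x by (intro continuous_map_pairedI) auto
  from continuous_map_compose[OF this cont_act] show ?thesis by (simp add: o_def)
qed

lemma cont_rmult: "h \<in> carrier G \<Longrightarrow> continuous_map TG TG (\<lambda>g. g \<otimes> h)"
proof -
  assume h: "h \<in> carrier G"
  have "continuous_map TG (prod_topology TG TG) (\<lambda>g. (g, h))"
    using h topG by (intro continuous_map_pairedI) auto
  from continuous_map_compose[OF this cont_mult] show ?thesis by (simp add: o_def)
qed

lemma lcos_eqI: "a \<in> carrier G \<Longrightarrow> b \<in> carrier G \<Longrightarrow> a <# H = b <# H \<longleftrightarrow> inv b \<otimes> a \<in> H"
  using lcos_eq_iff[OF sub] by blast

lemma lcos_H: "\<one> <# H = H"
  using lcos_mult_one subgroup.subset[OF sub] by blast


lemma slicing_eq: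
  assumes Ssub: "S \<subseteq> topspace TX" and sep: "\<forall>g \<in> carrier G - H. act g ` S \<inter> S = {}"
    and g: "g \<in> carrier G" and s: "s \<in> S"
  shows "slicing_map G act H S (act g s) = g <# H"
proof -
  let ?P = "\<lambda>C. \<exists>g'\<in>carrier G. \<exists>s'\<in>S. act g s = act g' s' \<and> C = g' <# H"
  have "?P (g <# H)" using g s by blast
  then have "?P (slicing_map G act H S (act g s))" unfolding slicing_map_def by (rule someI)
  then obtain g' s' where g': "g' \<in> carrier G" "s' \<in> S" "act g s = act g' s'"
    and C: "slicing_map G act H S (act g s) = g' <# H" by blast
  have "act (inv g \<otimes> g') s' = act (inv g) (act g' s')"
    using act_mult g g' Ssub by blast
  also have "\<dots> = s" using g'(3)[symmetric] act_inv_act g s Ssub by auto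
  finally have "act (inv g \<otimes> g') ` S \<inter> S \<noteq> {}" using g'(2) s by blast
  then have "inv g \<otimes> g' \<in> H" using sep g g' by blast
  then have "g' <# H = g <# H" using lcos_eqI g g' by blast
  with C show ?thesis by simp
qed

lemma slicing_in_lcosets:
  assumes Ssub: "S \<subseteq> topspace TX" and sep: "\<forall>g \<in> carrier G - H. act g ` S \<inter> S = {}"
    and glob: "orbit_set G act S = topspace TX" and x: "x \<in> topspace TX"
  shows "\<exists>g\<in>carrier G. slicing_map G act H S x = g <# H"
proof -
  from x glob obtain g s where "g \<in> carrier G" "s \<in> S" "x = act g s" unfolding orbit_set_def by blast
  then show ?thesis using slicing_eq[OF Ssub sep] by blast
qed

lemma slicing_image_iff:
  assumes Ssub: "S \<subseteq> topspace TX" and Hinv: "{act h s | h s. h \<in> H \<and> s \<in> S} = S"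
    and sep: "\<forall>g \<in> carrier G - H. act g ` S \<inter> S = {}"
    and glob: "orbit_set G act S = topspace TX" and C: "C \<subseteq> topspace TX" and g: "g \<in> carrier G"
  shows "g <# H \<in> slicing_map G act H S ` C \<longleftrightarrow> (\<exists>s\<in>S. act g s \<in> C)"
proof
  assume "\<exists>s\<in>S. act g s \<in> C"
  then show "g <# H \<in> slicing_map G act H S ` C" using slicing_eq[OF Ssub sep g] by force
next
  assume "g <# H \<in> slicing_map G act H S ` C"
  then obtain c where c: "c \<in> C" "g <# H = slicing_map G act H S c" by blast
  then have "c \<in> orbit_set G act S" using C glob by blast
  then obtain g' s' where g': "g' \<in> carrier G" "s' \<in> S" "c = act g' s'" unfolding orbit_set_def by blast
  then have "g <# H = g' <# H" using c slicing_eq[OF Ssub sep] by simp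
  then have hH: "inv g' \<otimes> g \<in> H" using lcos_eqI g g' by blast
  define h where "h = inv g' \<otimes> g"
  have h: "h \<in> H" "h \<in> carrier G" using hH h_def g g' by auto
  have "inv h \<in> H" using h sub by (simp add: subgroup.m_inv_closed)
  then have s: "act (inv h) s' \<in> S" using Hinv g' by blast
  have "g \<otimes> inv h = g'" using g g' unfolding h_def
    by (simp add: inv_mult_group m_assoc[symmetric])
  then have "act g (act (inv h) s') = c"
    using act_mult[of g "inv h" s'] g h g' Ssub by auto
  then show "\<exists>s\<in>S. act g s \<in> C" using s c by auto
qed

end


context tgs
begin

lemma lcos_in_lcosets: "g \<in> carrier G \<Longrightarrow> g <# H \<in> lcosets H"
  by (auto simp: LCOSETS_def)

lemma slicing_open_map:
  assumes slice: "is_global_slice G TX act H S"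
  shows "open_map TX (coset_topology G TG H) (slicing_map G act H S)"
proof -
  have Ssub: "S \<subseteq> topspace TX" and Hinv: "{act h s | h s. h \<in> H \<and> s \<in> S} = S"
    and sep: "\<forall>g \<in> carrier G - H. act g ` S \<inter> S = {}"
    and glob: "orbit_set G act S = topspace TX"
    using slice unfolding is_global_slice_def is_slice_def by auto
  show ?thesis unfolding open_map_def
  proof (intro allI impI)
    fix U assume U: "openin TX U"
    then have Usub: "U \<subseteq> topspace TX" by (rule openin_subset)
    have sub: "slicing_map G act H S ` U \<subseteq> lcosets H"
    proof
      fix D assume "D \<in> slicing_map G act H S ` U"
      then obtain u where u: "u \<in> U" "D = slicing_map G act H S u" by blast
      then obtain g where "g \<in> carrier G" "slicing_map G act H S u = g <# H"
        using slicing_in_lcosets[OF Ssub sep glob] Usub by blast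
      then show "D \<in> lcosets H" using u lcos_in_lcosets by simp
    qed
    have eq: "{g \<in> carrier G. g <# H \<in> slicing_map G act H S ` U}
        = (\<Union>s\<in>S. {g \<in> topspace TG. act g s \<in> U})"
    proof (rule equalityI; rule subsetI)
      fix g assume "g \<in> {g \<in> carrier G. g <# H \<in> slicing_map G act H S ` U}"
      then show "g \<in> (\<Union>s\<in>S. {g \<in> topspace TG. act g s \<in> U})"
        using slicing_image_iff[OF Ssub Hinv sep glob Usub] topG by blast
    next
      fix g assume "g \<in> (\<Union>s\<in>S. {g \<in> topspace TG. act g s \<in> U})"
      then show "g \<in> {g \<in> carrier G. g <# H \<in> slicing_map G act H S ` U}"
        using slicing_image_iff[OF Ssub Hinv sep glob Usub] topG by blast
    qed
    have "openin TG (\<Union>s\<in>S. {g \<in> topspace TG. act g s \<in> U})"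
    proof (rule openin_Union)
      fix T assume "T \<in> (\<lambda>s. {g \<in> topspace TG. act g s \<in> U}) ` S"
      then obtain s where "s \<in> S" "T = {g \<in> topspace TG. act g s \<in> U}" by blast
      then show "openin TG T" using openin_continuous_map_preimage[OF cont_act_left[of s] U] Ssub by auto
    qed
    then show "openin (coset_topology G TG H) (slicing_map G act H S ` U)"
      unfolding coset_top_openin eq using sub by simp
  qed
qed

lemma slicing_closed_map:
  assumes slice: "is_global_slice G TX act H S" and cpt: "compactin TX S"
  shows "closed_map TX (coset_topology G TG H) (slicing_map G act H S)"
proof -
  have Ssub: "S \<subseteq> topspace TX" and Hinv: "{act h s | h s. h \<in> H \<and> s \<in> S} = S"
    and sep: "\<forall>g \<in> carrier G - H. act g ` S \<inter> S = {}"
    and glob: "orbit_set G act S = topspace TX"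
    using slice unfolding is_global_slice_def is_slice_def by auto
  show ?thesis unfolding closed_map_def
  proof (intro allI impI)
    fix C assume C: "closedin TX C"
    then have Csub: "C \<subseteq> topspace TX" by (rule closedin_subset)
    have sub: "slicing_map G act H S ` C \<subseteq> lcosets H"
    proof
      fix D assume "D \<in> slicing_map G act H S ` C"
      then obtain u where u: "u \<in> C" "D = slicing_map G act H S u" by blast
      then obtain g where "g \<in> carrier G" "slicing_map G act H S u = g <# H"
        using slicing_in_lcosets[OF Ssub sep glob] Csub by blast
      then show "D \<in> lcosets H" using u lcos_in_lcosets by simp
    qed
    have eq: "{g \<in> carrier G. g <# H \<in> lcosets H - slicing_map G act H S ` C}
        = {g \<in> topspace TG. \<forall>s\<in>S. act g s \<notin> C}"
    proof (rule equalityI; rule subsetI)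
      fix g assume "g \<in> {g \<in> carrier G. g <# H \<in> lcosets H - slicing_map G act H S ` C}"
      then show "g \<in> {g \<in> topspace TG. \<forall>s\<in>S. act g s \<notin> C}"
        using slicing_image_iff[OF Ssub Hinv sep glob Csub] topG by blast
    next
      fix g assume "g \<in> {g \<in> topspace TG. \<forall>s\<in>S. act g s \<notin> C}"
      then show "g \<in> {g \<in> carrier G. g <# H \<in> lcosets H - slicing_map G act H S ` C}"
        using slicing_image_iff[OF Ssub Hinv sep glob Csub] topG lcos_in_lcosets by blast
    qed
    have P: "openin (prod_topology TG TX)
       {p \<in> topspace (prod_topology TG TX). (\<lambda>(g, x). act g x) p \<in> topspace TX - C}"
    proof -
      have "openin TX (topspace TX - C)" using C by (simp add: closedin_def)
      from openin_continuous_map_preimage[OF cont_act this] show ?thesis .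
    qed
    have "openin TG {g \<in> topspace TG. \<forall>s\<in>S. act g s \<notin> C}"
    proof (subst openin_subopen, intro ballI)
      fix g0 assume g0: "g0 \<in> {g \<in> topspace TG. \<forall>s\<in>S. act g s \<notin> C}"
      have "{g0} \<times> S \<subseteq> {p \<in> topspace (prod_topology TG TX). (\<lambda>(g, x). act g x) p \<in> topspace TX - C}"
        using g0 Ssub act_in topG by auto
      from tube_lemma_right[OF P cpt _ this] g0 obtain U V where
        UV: "openin TG U" "openin TX V" "g0 \<in> U" "S \<subseteq> V"
          "U \<times> V \<subseteq> {p \<in> topspace (prod_topology TG TX). (\<lambda>(g, x). act g x) p \<in> topspace TX - C}"
        by blast
      have "U \<subseteq> {g \<in> topspace TG. \<forall>s\<in>S. act g s \<notin> C}"
      proof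
        fix g assume g: "g \<in> U"
        have "\<forall>s\<in>S. act g s \<notin> C"
        proof
          fix s assume "s \<in> S"
          then have "(g, s) \<in> U \<times> V" using g UV by auto
          then show "act g s \<notin> C" using UV(5) by auto
        qed
        then show "g \<in> {g \<in> topspace TG. \<forall>s\<in>S. act g s \<notin> C}"
          using g UV(1) openin_subset by blast
      qed
      then show "\<exists>T. openin TG T \<and> g0 \<in> T \<and> T \<subseteq> {g \<in> topspace TG. \<forall>s\<in>S. act g s \<notin> C}"
        using UV by blast
    qed
    then have "openin (coset_topology G TG H) (lcosets H - slicing_map G act H S ` C)"
      unfolding coset_top_openin eq by auto
    then show "closedin (coset_topology G TG H) (slicing_map G act H S ` C)"
      unfolding closedin_def coset_top_topspace[OF topG] using sub by simp
  qed
qed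

end


context tgs
begin

lemma slicing_continuous:
  assumes slice: "is_global_slice G TX act H S" and sm: "small G TG TX act S"
  shows "continuous_map TX (coset_topology G TG H) (slicing_map G act H S)"
proof -
  have Ssub: "S \<subseteq> topspace TX" and Hinv: "{act h s | h s. h \<in> H \<and> s \<in> S} = S"
    and sep: "\<forall>g \<in> carrier G - H. act g ` S \<inter> S = {}"
    and glob: "orbit_set G act S = topspace TX"
    and Scl0: "closedin (subtopology TX (orbit_set G act S)) S"
    using slice unfolding is_global_slice_def is_slice_def by auto
  have Scl: "closedin TX S" using Scl0 glob by simp
  let ?f = "slicing_map G act H S"
  have maps: "?f \<in> topspace TX \<rightarrow> topspace (coset_topology G TG H)"
  proof
    fix x assume "x \<in> topspace TX"
    then obtain g where "g \<in> carrier G" "?f x = g <# H"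
      using slicing_in_lcosets[OF Ssub sep glob] by blast
    then show "?f x \<in> topspace (coset_topology G TG H)"
      using lcos_in_lcosets coset_top_topspace[OF topG] by simp
  qed
  have "openin TX {x \<in> topspace TX. ?f x \<in> W}" if W: "openin (coset_topology G TG H) W" for W
  proof (subst openin_subopen, intro ballI)
    fix x0 assume x0: "x0 \<in> {x \<in> topspace TX. ?f x \<in> W}"
    define Q where "Q = {g \<in> carrier G. g <# H \<in> W}"
    have Qo: "openin TG Q" using W unfolding Q_def coset_top_openin by simp
    define Q' where "Q' = {k \<in> topspace TG. inv k \<in> Q}"
    have Q'o: "openin TG Q'" unfolding Q'_def by (rule openin_continuous_map_preimage[OF cont_inv Qo])
    obtain N where N: "neighborhood TX x0 N" "thin G TG act N S"
      using sm x0 unfolding small_def by blast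
    obtain W0 where W0: "openin TX W0" "x0 \<in> W0" "W0 \<subseteq> N"
      using N(1) unfolding neighborhood_def by blast
    define K where "K = TG closure_of (transporter G act N S)"
    have Kc: "compactin TG K" using N(2) unfolding thin_def K_def by simp
    define K' where "K' = K \<inter> (topspace TG - Q')"
    have K'c: "compactin TG K'" unfolding K'_def
      by (rule compact_Int_closedin[OF Kc]) (use Q'o in \<open>simp add: closedin_diff\<close>)
    define P where "P = {p \<in> topspace (prod_topology TG TX). (\<lambda>(g, x). act g x) p \<in> topspace TX - S}"
    have Po: "openin (prod_topology TG TX) P"
    proof -
      have "openin TX (topspace TX - S)" using Scl by (simp add: closedin_def)
      from openin_continuous_map_preimage[OF cont_act this] show ?thesis unfolding P_def .
    qed
    have "K' \<times> {x0} \<subseteq> P"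
    proof
      fix p assume p: "p \<in> K' \<times> {x0}"
      then obtain k where k: "k \<in> K'" "p = (k, x0)" by blast
      have kc: "k \<in> carrier G" using k(1) compactin_subset_topspace[OF Kc] topG unfolding K'_def by blast
      have x0t: "x0 \<in> topspace TX" using x0 by simp
      have "act k x0 \<notin> S"
      proof
        assume ks: "act k x0 \<in> S"
        have "?f (act (inv k) (act k x0)) = inv k <# H"
          using slicing_eq[OF Ssub sep _ ks] kc by simp
        then have "?f x0 = inv k <# H" using act_inv_act kc x0t by simp
        then have "inv k \<in> Q" using x0 kc unfolding Q_def by simp
        then have "k \<in> Q'" using kc topG unfolding Q'_def by simp
        then show False using k(1) unfolding K'_def by blast
      qed
      then show "p \<in> P" unfolding P_def using k kc topG x0t act_in by auto
    qed
    from tube_lemma_left[OF Po K'c _ this] x0 obtain U V where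
      UV: "openin TG U" "openin TX V" "K' \<subseteq> U" "x0 \<in> V" "U \<times> V \<subseteq> P" by auto
    have "V \<inter> W0 \<subseteq> {x \<in> topspace TX. ?f x \<in> W}"
    proof
      fix y assume y: "y \<in> V \<inter> W0"
      then have yt: "y \<in> topspace TX" using UV(2) openin_subset by blast
      then obtain t s where ts: "t \<in> carrier G" "s \<in> S" "y = act t s"
        using glob unfolding orbit_set_def by blast
      have st: "s \<in> topspace TX" using ts Ssub by blast
      have ity: "act (inv t) y = s" using ts act_inv_act st by simp
      have "inv t \<in> transporter G act N S"
        unfolding transporter_def using ity y W0(3) ts(1,2) by force
      moreover have "transporter G act N S \<subseteq> topspace TG"
        unfolding transporter_def topG by blast
      ultimately have itK: "inv t \<in> K" unfolding K_def using closure_of_subset by blast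
      have "inv t \<in> Q'"
      proof (rule ccontr)
        assume "inv t \<notin> Q'"
        then have "inv t \<in> K'" using itK ts(1) topG unfolding K'_def by simp
        then have "(inv t, y) \<in> P" using UV(3,5) y by blast
        then show False using ity ts(2) unfolding P_def by simp
      qed
      then have "t \<in> Q" using ts(1) unfolding Q'_def by simp
      then have "t <# H \<in> W" unfolding Q_def by simp
      moreover have "?f y = t <# H" using slicing_eq[OF Ssub sep ts(1,2)] ts(3) by simp
      ultimately show "y \<in> {x \<in> topspace TX. ?f x \<in> W}" using yt by simp
    qed
    moreover have "openin TX (V \<inter> W0)" using UV(2) W0(1) by blast
    moreover have "x0 \<in> V \<inter> W0" using UV(4) W0(2) by blast
    ultimately show "\<exists>T. openin TX T \<and> x0 \<in> T \<and> T \<subseteq> {x \<in> topspace TX. ?f x \<in> W}" by blast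
  qed
  then show ?thesis using maps unfolding continuous_map_def by blast
qed

end


context tgs
begin

lemma part_b:
  assumes hd: "Hausdorff_space TG" and Hc: "compactin TG H" and lc: "locally_compact_space TG"
    and fc: "continuous_map TX (coset_topology G TG H) f"
    and eqv: "\<forall>g\<in>carrier G. \<forall>x\<in>topspace TX. f (act g x) = g <# f x"
  shows "let S = {x \<in> topspace TX. f x = \<one> <# H} in
     is_global_slice G TX act H S \<and> small G TG TX act S \<and> (\<forall>x\<in>topspace TX. slicing_map G act H S x = f x)"
proof -
  define S where "S = {x \<in> topspace TX. f x = \<one> <# H}"
  have Hsub: "H \<subseteq> carrier G" using sub by (rule subgroup.subset)
  have fx: "\<exists>g\<in>carrier G. f x = g <# H" if x: "x \<in> topspace TX" for x
  proof -
    have "f x \<in> topspace (coset_topology G TG H)"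
      using continuous_map_image_subset_topspace[OF fc] x by blast
    then show ?thesis unfolding coset_top_topspace[OF topG] LCOSETS_def by blast
  qed
  have one_iff: "g <# H = \<one> <# H \<longleftrightarrow> g \<in> H" if g: "g \<in> carrier G" for g
    using lcos_eqI[OF g one_closed] g by simp
  have Ssub: "S \<subseteq> topspace TX" unfolding S_def by blast
  have fS: "f (act g s) = g <# H" if g: "g \<in> carrier G" and s: "s \<in> S" for g s
  proof -
    have "f (act g s) = g <# (\<one> <# H)" using eqv g s unfolding S_def by auto
    also have "\<dots> = g <# H" using lcos_H by simp
    finally show ?thesis .
  qed
  have Hinv: "{act h s | h s. h \<in> H \<and> s \<in> S} = S"
  proof (rule equalityI; rule subsetI)
    fix y assume "y \<in> {act h s | h s. h \<in> H \<and> s \<in> S}"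
    then obtain h s where hs: "h \<in> H" "s \<in> S" "y = act h s" by blast
    have hc: "h \<in> carrier G" using hs Hsub by blast
    have "f y = h <# H" using fS hc hs by simp
    also have "\<dots> = \<one> <# H" using one_iff hc hs by simp
    finally show "y \<in> S" using act_in hc hs Ssub unfolding S_def by auto
  next
    fix y assume y: "y \<in> S"
    then have "y = act \<one> y" using act_one Ssub by auto
    then show "y \<in> {act h s | h s. h \<in> H \<and> s \<in> S}" using y subgroup.one_closed[OF sub] by blast
  qed
  have rep: "act (inv g) x \<in> S \<and> x = act g (act (inv g) x)"
    if x: "x \<in> topspace TX" and g: "g \<in> carrier G" and fxg: "f x = g <# H" for x g
  proof -
    have "f (act (inv g) x) = inv g <# (g <# H)" using eqv x g fxg by simp
    also have "\<dots> = (inv g \<otimes> g) <# H" using lcos_m_assoc Hsub g by simp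
    also have "\<dots> = \<one> <# H" using g by simp
    finally show ?thesis using act_in act_act_inv x g unfolding S_def by simp
  qed
  have glob: "orbit_set G act S = topspace TX"
  proof (rule equalityI; rule subsetI)
    fix y assume "y \<in> orbit_set G act S"
    then show "y \<in> topspace TX" unfolding orbit_set_def using act_in Ssub by blast
  next
    fix x assume x: "x \<in> topspace TX"
    then obtain g where g: "g \<in> carrier G" "f x = g <# H" using fx by blast
    then show "x \<in> orbit_set G act S" using rep[OF x g] unfolding orbit_set_def by blast
  qed
  have sep: "\<forall>g \<in> carrier G - H. act g ` S \<inter> S = {}"
  proof (intro ballI equalityI subsetI)
    fix g y assume g: "g \<in> carrier G - H" and y: "y \<in> act g ` S \<inter> S"
    then obtain s where s: "s \<in> S" "y = act g s" by blast
    have "f y = g <# H" using fS g s by simp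
    moreover have "f y = \<one> <# H" using y unfolding S_def by blast
    ultimately show "y \<in> {}" using one_iff g by auto
  qed simp
  have Hclosed: "closedin TG H" by (rule compactin_imp_closedin[OF hd Hc])
  have single: "closedin (coset_topology G TG H) {\<one> <# H}"
  proof -
    have eq: "{g \<in> carrier G. g <# H \<in> lcosets H - {\<one> <# H}} = topspace TG - H"
      using one_iff lcos_in_lcosets topG by auto
    have "openin (coset_topology G TG H) (lcosets H - {\<one> <# H})"
      unfolding coset_top_openin eq using Hclosed by (auto simp: closedin_def)
    then show ?thesis unfolding closedin_def coset_top_topspace[OF topG]
      using lcos_in_lcosets[OF one_closed] by simp
  qed
  have Scl: "closedin TX S"
    using closedin_continuous_map_preimage[OF fc single] unfolding S_def by simp
  have slice: "is_global_slice G TX act H S"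
    unfolding is_global_slice_def is_slice_def using Ssub Hinv Scl glob sep by simp
  have fm: "\<forall>x\<in>topspace TX. slicing_map G act H S x = f x"
  proof
    fix x assume x: "x \<in> topspace TX"
    then obtain g where g: "g \<in> carrier G" "f x = g <# H" using fx by blast
    have "slicing_map G act H S (act g (act (inv g) x)) = g <# H"
      using slicing_eq[OF Ssub sep g(1)] rep[OF x g] by blast
    then show "slicing_map G act H S x = f x" using rep[OF x g] g by simp
  qed
  have small: "small G TG TX act S" unfolding small_def
  proof
    fix x0 assume x0: "x0 \<in> topspace TX"
    then obtain g0 where g0: "g0 \<in> carrier G" "f x0 = g0 <# H" using fx by blast
    have g0t: "g0 \<in> topspace TG" using g0 topG by simp
    obtain U0 K where UK: "openin TG U0" "compactin TG K" "g0 \<in> U0" "U0 \<subseteq> K"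
      using lc[unfolded locally_compact_space_def, rule_format, OF g0t] by blast
    have U0c: "U0 \<subseteq> carrier G" using openin_subset[OF UK(1)] topG by simp
    define Im where "Im = (\<lambda>g. g <# H) ` U0"
    have Imeq: "{g \<in> carrier G. g <# H \<in> Im} = (\<Union>h\<in>H. {g \<in> topspace TG. g \<otimes> h \<in> U0})"
    proof (rule equalityI; rule subsetI)
      fix g assume "g \<in> {g \<in> carrier G. g <# H \<in> Im}"
      then obtain u where gu: "g \<in> carrier G" "u \<in> U0" "g <# H = u <# H" unfolding Im_def by auto
      have uc: "u \<in> carrier G" using gu U0c by blast
      have "inv g \<otimes> u \<in> H" using lcos_eqI[OF uc gu(1)] gu by simp
      moreover have "g \<otimes> (inv g \<otimes> u) = u" using gu uc by (simp add: m_assoc[symmetric])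
      moreover have "g \<in> topspace TG" using gu topG by simp
      ultimately have "g \<in> {g \<in> topspace TG. g \<otimes> (inv g \<otimes> u) \<in> U0}" using gu by simp
      then show "g \<in> (\<Union>h\<in>H. {g \<in> topspace TG. g \<otimes> h \<in> U0})" using \<open>inv g \<otimes> u \<in> H\<close> by blast
    next
      fix g assume "g \<in> (\<Union>h\<in>H. {g \<in> topspace TG. g \<otimes> h \<in> U0})"
      then obtain h where gh0: "h \<in> H" "g \<in> topspace TG" "g \<otimes> h \<in> U0" by blast
      then have gh: "h \<in> H" "g \<in> carrier G" "g \<otimes> h \<in> U0" using topG by simp_all
      have hc: "h \<in> carrier G" using gh Hsub by blast
      have "inv g \<otimes> (g \<otimes> h) = h" using gh hc by (simp add: m_assoc[symmetric])
      then have "(g \<otimes> h) <# H = g <# H" using lcos_eqI[of "g \<otimes> h" g] gh hc by simp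
      moreover have "(g \<otimes> h) <# H \<in> Im" unfolding Im_def using gh(3) by (rule imageI)
      ultimately show "g \<in> {g \<in> carrier G. g <# H \<in> Im}" using gh by simp
    qed
    have "openin TG (\<Union>h\<in>H. {g \<in> topspace TG. g \<otimes> h \<in> U0})"
    proof (rule openin_Union)
      fix T assume "T \<in> (\<lambda>h. {g \<in> topspace TG. g \<otimes> h \<in> U0}) ` H"
      then obtain h where "h \<in> H" "T = {g \<in> topspace TG. g \<otimes> h \<in> U0}" by blast
      then show "openin TG T" using openin_continuous_map_preimage[OF cont_rmult UK(1)] Hsub by blast
    qed
    moreover have "Im \<subseteq> lcosets H" unfolding Im_def using U0c lcos_in_lcosets by blast
    ultimately have Imo: "openin (coset_topology G TG H) Im" unfolding coset_top_openin Imeq by simp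
    define V where "V = {x \<in> topspace TX. f x \<in> Im}"
    have Vo: "openin TX V" unfolding V_def by (rule openin_continuous_map_preimage[OF fc Imo])
    have x0V: "x0 \<in> V" unfolding V_def Im_def using x0 g0 UK(3) by blast
    have nb: "neighborhood TX x0 V" unfolding neighborhood_def using Vo x0V openin_subset by blast
    define L where "L = (\<lambda>p. fst p \<otimes> inv (snd p)) ` (H \<times> K)"
    have c1: "continuous_map (prod_topology TG TG) (prod_topology TG TG) (\<lambda>p. (fst p, inv (snd p)))"
    proof (intro continuous_map_pairedI continuous_map_fst)
      show "continuous_map (prod_topology TG TG) TG (\<lambda>p. inv (snd p))"
        using continuous_map_compose[OF continuous_map_snd cont_inv] by (simp add: o_def)
    qed
    have c2: "continuous_map (prod_topology TG TG) TG (\<lambda>p. fst p \<otimes> inv (snd p))"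
      using continuous_map_compose[OF c1 cont_mult] by (simp add: o_def)
    have HK: "compactin (prod_topology TG TG) (H \<times> K)" using Hc UK(2) by (simp add: compactin_Times)
    have Lc: "compactin TG L" unfolding L_def by (rule image_compactin[OF HK c2])
    have trL: "transporter G act V S \<subseteq> L"
    proof
      fix t assume "t \<in> transporter G act V S"
      then obtain y where ty: "t \<in> carrier G" "y \<in> V" "act t y \<in> S" unfolding transporter_def by blast
      then obtain u where u: "u \<in> U0" "f y = u <# H" unfolding V_def Im_def by blast
      have uc: "u \<in> carrier G" using u U0c by blast
      have yt: "y \<in> topspace TX" using ty unfolding V_def by blast
      have "f (act t y) = t <# (u <# H)" using eqv ty yt u by simp
      also have "\<dots> = (t \<otimes> u) <# H" using lcos_m_assoc Hsub ty uc by simp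
      finally have "(t \<otimes> u) <# H = \<one> <# H" using ty unfolding S_def by simp
      then have tuH: "t \<otimes> u \<in> H" using one_iff ty uc by simp
      have "t = (t \<otimes> u) \<otimes> inv u" using ty uc by (simp add: m_assoc)
      moreover have "(t \<otimes> u, u) \<in> H \<times> K" using tuH u UK(4) by blast
      ultimately show "t \<in> L" unfolding L_def by (metis (no_types, lifting) fst_conv snd_conv rev_image_eqI)
    qed
    have "TG closure_of (transporter G act V S) \<subseteq> L"
      by (rule closure_of_minimal[OF trL compactin_imp_closedin[OF hd Lc]])
    then have "compactin TG (TG closure_of (transporter G act V S))"
      using closed_compactin[OF Lc] closedin_closure_of by blast
    then show "\<exists>N. neighborhood TX x0 N \<and> thin G TG act N S" using nb unfolding thin_def by blast
  qed
  show ?thesis using slice small fm unfolding S_def Let_def by simp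
qed

end

theorem theorem2p2:
  fixes G :: "('g, 'b) monoid_scheme" and TG :: "'g topology"
    and TX :: "'x topology" and act :: "'g \<Rightarrow> 'x \<Rightarrow> 'x" and H :: "'g set"
  assumes "topological_group G TG"
    and "Hausdorff_space TG" and "completely_regular_space TG"
    and "locally_compact_space TG"
    and "Hausdorff_space TX" and "completely_regular_space TX"
    and "subgroup H G" and "compactin TG H"
    and "proper_G_space G TG TX act"
  shows
    "(\<forall>S. is_global_slice G TX act H S \<and> small G TG TX act S \<longrightarrow>
          continuous_map TX (coset_topology G TG H) (slicing_map G act H S) \<and>
          open_map TX (coset_topology G TG H) (slicing_map G act H S) \<and>
          (compactin TX S \<longrightarrow> closed_map TX (coset_topology G TG H) (slicing_map G act H S)))
     \<and>
     (\<forall>f. continuous_map TX (coset_topology G TG H) f \<and>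
          (\<forall>g \<in> carrier G. \<forall>x \<in> topspace TX. f (act g x) = coset_act G g (f x)) \<longrightarrow>
          (let S = {x \<in> topspace TX. f x = \<one>\<^bsub>G\<^esub> <#\<^bsub>G\<^esub> H} in
            is_global_slice G TX act H S \<and> small G TG TX act S \<and>
            (\<forall>x \<in> topspace TX. slicing_map G act H S x = f x)))"
proof -
  have "tgs G TG TX act H" unfolding tgs_def
    using assms(1,7,9) by (simp add: proper_G_space_def)
  then interpret tgs G TG TX act H .
  show ?thesis
  proof (intro conjI allI impI)
    fix S assume a: "is_global_slice G TX act H S \<and> small G TG TX act S"
    show "continuous_map TX (coset_topology G TG H) (slicing_map G act H S)"
      using slicing_continuous a by blast
    show "open_map TX (coset_topology G TG H) (slicing_map G act H S)"
      using slicing_open_map a by blast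
    show "compactin TX S \<Longrightarrow> closed_map TX (coset_topology G TG H) (slicing_map G act H S)"
      using slicing_closed_map a by blast
  next
    fix f assume a: "continuous_map TX (coset_topology G TG H) f \<and>
          (\<forall>g \<in> carrier G. \<forall>x \<in> topspace TX. f (act g x) = coset_act G g (f x))"
    show "let S = {x \<in> topspace TX. f x = \<one>\<^bsub>G\<^esub> <#\<^bsub>G\<^esub> H} in
            is_global_slice G TX act H S \<and> small G TG TX act S \<and>
            (\<forall>x \<in> topspace TX. slicing_map G act H S x = f x)"
      using part_b[OF assms(2) assms(8) assms(4)] a by blast
  qed
qed

end
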